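(* Let $n\ge2$ be even. For $q>0$, let $\omega=(nq,\ldots,nq,-nq,\ldots,-nq)\in\mathbb{R}^n$ (with $n/2$ entries equal to $nq$ and $n/2$ entries equal to $-nq$) and $k=(n,\ldots,n)$. The maximum over $q>0$ of the number of distinct equilibria $\theta\in(-\pi,\pi]^n$ satisfying $$\omega_\nu=\frac1n\sum_{\mu=1}^nk_\nu k_\mu\sin(\theta_\nu-\theta_\mu)\ (\nu=1,\ldots,n),\qquad \sum_{\mu=1}^nk_\mu e^{i\theta_\mu}\in\mathbb{R}_{\ge0},$$ is $2^n-\binom{n}{n/2}$, and this maximum is attained for every $0<q<1$. *)

theory Defs
  imports Complex_Main "HOL-Library.FuncSet"
begin

text \<open>Indices are 0-based: \<open>\<nu>, \<mu> \<in> {0..<n}\<close>. A phase vector \<open>\<theta> \<in> (-pi,pi]^n\<close>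
  is an extensional function on \<open>{0..<n}\<close>.\<close>

definition kur_omega :: "nat \<Rightarrow> real \<Rightarrow> nat \<Rightarrow> real" where
  "kur_omega n q \<nu> = (if \<nu> < n div 2 then real n * q else - (real n * q))"

definition kur_k :: "nat \<Rightarrow> nat \<Rightarrow> real" where
  "kur_k n \<mu> = real n"

definition equilibria :: "nat \<Rightarrow> (nat \<Rightarrow> real) \<Rightarrow> (nat \<Rightarrow> real) \<Rightarrow> (nat \<Rightarrow> real) set" where
  "equilibria n \<omega> k =
     {\<theta> \<in> {0..<n} \<rightarrow>\<^sub>E {-pi<..pi}.
        (\<forall>\<nu><n. \<omega> \<nu> = (1 / real n) * (\<Sum>\<mu><n. k \<nu> * k \<mu> * sin (\<theta> \<nu> - \<theta> \<mu>))) \<and>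
        (\<Sum>\<mu><n. complex_of_real (k \<mu>) * exp (\<i> * complex_of_real (\<theta> \<mu>))) \<in> \<real> \<and>
        0 \<le> Re (\<Sum>\<mu><n. complex_of_real (k \<mu>) * exp (\<i> * complex_of_real (\<theta> \<mu>)))}"

end

theory Submission
  imports Defs
begin

lemma arcsin_sin':
  fixes x :: real
  assumes "-(pi/2) \<le> x" "x \<le> pi/2" shows "arcsin (sin x) = x"
  using arcsin_sin[OF assms] .

lemma sin_pos_cases:
  fixes x a :: real
  assumes "-pi < x" "x \<le> pi" "0 < a" "a < pi/2" "sin x = sin a"
  shows "x = a \<or> x = pi - a"
proof -
  have sa: "sin a > 0" using assms by (intro sin_gt_zero) auto
  have x0: "x > 0"
  proof (rule ccontr)
    assume "\<not> x > 0"
    then have "sin (-x) \<ge> 0" using assms(1) by (intro sin_ge_zero) auto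
    then show False using sa assms(5) by simp
  qed
  have xpi: "x < pi"
  proof (rule ccontr)
    assume "\<not> x < pi" then have "x = pi" using assms(2) by simp
    then show False using sa assms(5) by simp
  qed
  have aa: "arcsin (sin a) = a" using assms(3,4) pi_gt_zero by (intro arcsin_sin') linarith+
  show ?thesis
  proof (cases "x \<le> pi/2")
    case True
    have "arcsin (sin x) = x" using True x0 pi_gt_zero by (intro arcsin_sin') linarith+
    then show ?thesis using aa assms(5) by metis
  next
    case False
    have "sin (pi - x) = sin x" by simp
    moreover have "arcsin (sin (pi - x)) = pi - x" using False xpi pi_gt_zero by (intro arcsin_sin') linarith+
    ultimately have "pi - x = a" using aa assms(5) by metis
    then show ?thesis by simp
  qed
qed

lemma sin_neg_cases:
  fixes x a :: real
  assumes "-pi < x" "x \<le> pi" "0 < a" "a < pi/2" "sin x = - sin a"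
  shows "x = - a \<or> x = -(pi - a)"
proof -
  have sa: "sin a > 0" using assms by (intro sin_gt_zero) auto
  have "x \<noteq> pi" using sa assms(5) by auto
  then have "-pi < -x" "-x \<le> pi" using assms(1,2) by auto
  from sin_pos_cases[OF this assms(3,4)] assms(5) show ?thesis by auto
qed

lemma sin2_cases:
  fixes x b :: real
  assumes "0 < x" "x < pi" "sin x = b"
  shows "x = arcsin b \<or> x = pi - arcsin b"
proof (cases "x \<le> pi/2")
  case True
  have "arcsin (sin x) = x" using True assms(1) pi_gt_zero by (intro arcsin_sin') linarith+
  then show ?thesis using assms(3) by metis
next
  case False
  have "sin (pi - x) = sin x" by simp
  moreover have "arcsin (sin (pi - x)) = pi - x" using False assms(2) pi_gt_zero by (intro arcsin_sin') linarith+
  ultimately show ?thesis using assms(3) by (metis add_diff_cancel_left' diff_add_cancel)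
qed

lemma eq_term:
  fixes \<theta> :: "nat \<Rightarrow> real"
  assumes "n > 0"
  shows "(1 / real n) * (\<Sum>\<mu><n. kur_k n \<nu> * kur_k n \<mu> * sin (\<theta> \<nu> - \<theta> \<mu>)) =
    real n * (sin (\<theta> \<nu>) * (\<Sum>\<mu><n. cos (\<theta> \<mu>)) - cos (\<theta> \<nu>) * (\<Sum>\<mu><n. sin (\<theta> \<mu>)))"
proof -
  have "(\<Sum>\<mu><n. kur_k n \<nu> * kur_k n \<mu> * sin (\<theta> \<nu> - \<theta> \<mu>)) =
     real n * real n * (\<Sum>\<mu><n. sin (\<theta> \<nu>) * cos (\<theta> \<mu>) - cos (\<theta> \<nu>) * sin (\<theta> \<mu>))"
    by (simp add: kur_k_def sin_diff sum_distrib_left)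
  also have "\<dots> = real n * real n * (sin (\<theta> \<nu>) * (\<Sum>\<mu><n. cos (\<theta> \<mu>)) - cos (\<theta> \<nu>) * (\<Sum>\<mu><n. sin (\<theta> \<mu>)))"
    by (simp add: sum_subtractf sum_distrib_left)
  finally show ?thesis using assms by simp
qed

lemma re_sum:
  fixes \<theta> :: "nat \<Rightarrow> real"
  shows "Re (\<Sum>\<mu><n. complex_of_real (kur_k n \<mu>) * exp (\<i> * complex_of_real (\<theta> \<mu>))) = real n * (\<Sum>\<mu><n. cos (\<theta> \<mu>))"
    and "Im (\<Sum>\<mu><n. complex_of_real (kur_k n \<mu>) * exp (\<i> * complex_of_real (\<theta> \<mu>))) = real n * (\<Sum>\<mu><n. sin (\<theta> \<mu>))"
  by (simp_all add: kur_k_def Re_exp Im_exp sum_distrib_left)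


lemma sum_pm:
  fixes c :: real
  assumes "P \<subseteq> {..<n}"
  shows "(\<Sum>\<nu><n. if \<nu> \<in> P then c else - c) = c * (2 * real (card P) - real n)"
proof -
  have "(\<Sum>\<nu><n. if \<nu> \<in> P then c else - c) = (\<Sum>\<nu><n. c * (2 * of_bool (\<nu> \<in> P) - 1))"
    by (intro sum.cong) auto
  also have "\<dots> = c * (\<Sum>\<nu><n. 2 * of_bool (\<nu> \<in> P) - 1)"
    by (simp add: sum_distrib_left)
  also have "(\<Sum>\<nu><n. 2 * of_bool (\<nu> \<in> P) - (1::real)) = 2 * (\<Sum>\<nu><n. of_bool (\<nu> \<in> P)) - real n"
    by (simp add: sum_subtractf sum_distrib_left[symmetric] del: sum_of_bool_eq)
  also have "({..<n} \<inter> {x. x \<in> P}) = P" using assms by auto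
  then have "(\<Sum>\<nu><n. (of_bool (\<nu> \<in> P)::real)) = real (card P)" by simp
  finally show ?thesis by simp
qed

definition gth :: "nat \<Rightarrow> nat set \<Rightarrow> real \<Rightarrow> nat \<Rightarrow> real" where
  "gth n P a \<nu> = (if \<nu> < n then (if \<nu> < n div 2 then 1 else -1) * (if \<nu> \<in> P then a else pi - a) else undefined)"

lemma gth_sin: "\<nu> < n \<Longrightarrow> sin (gth n P a \<nu>) = (if \<nu> < n div 2 then sin a else - sin a)"
  by (simp add: gth_def)

lemma gth_cos: "\<nu> < n \<Longrightarrow> cos (gth n P a \<nu>) = (if \<nu> \<in> P then cos a else - cos a)"
  by (simp add: gth_def)

lemma gth_range: "\<nu> < n \<Longrightarrow> 0 < a \<Longrightarrow> a < pi/2 \<Longrightarrow> -pi < gth n P a \<nu> \<and> gth n P a \<nu> \<le> pi"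
  using pi_gt_zero by (simp add: gth_def)


lemma gth_in_E:
  assumes ev: "even n" and n2: "n \<ge> 2" and q: "q > 0" and P: "P \<subseteq> {..<n}"
    and a: "0 < a" "a < pi/2" and eq: "sin (2*a) * (2 * real (card P) - real n) = 2 * q"
  shows "gth n P a \<in> equilibria n (kur_omega n q) (kur_k n)"
proof -
  let ?th = "gth n P a"
  define d where "d = 2 * real (card P) - real n"
  have ca: "cos a > 0" using a by (intro cos_gt_zero) auto
  have sa: "sin a > 0" using a by (intro sin_gt_zero) auto
  have qd: "q = sin a * cos a * d" using eq unfolding d_def sin_double by simp
  have dpos: "d > 0" using qd q sa ca by (metis mult_pos_pos zero_less_mult_pos)
  have C: "(\<Sum>\<mu><n. cos (?th \<mu>)) = cos a * d"
  proof -
    have "(\<Sum>\<mu><n. cos (?th \<mu>)) = (\<Sum>\<mu><n. if \<mu> \<in> P then cos a else - cos a)"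
      by (intro sum.cong) (auto simp: gth_cos)
    then show ?thesis using sum_pm[OF P] d_def by simp
  qed
  have S: "(\<Sum>\<mu><n. sin (?th \<mu>)) = 0"
  proof -
    have "(\<Sum>\<mu><n. sin (?th \<mu>)) = (\<Sum>\<mu><n. if \<mu> \<in> {..<n div 2} then sin a else - sin a)"
      by (intro sum.cong) (auto simp: gth_sin)
    also have "\<dots> = sin a * (2 * real (card {..<n div 2}) - real n)"
      by (rule sum_pm) auto
    also have "\<dots> = 0" using ev by auto
    finally show ?thesis .
  qed
  have n0: "n > 0" using n2 by simp
  show ?thesis
    unfolding equilibria_def
  proof (intro CollectI conjI allI impI)
    show "?th \<in> {0..<n} \<rightarrow>\<^sub>E {-pi<..pi}"
      using gth_range[OF _ a] by (auto simp: PiE_iff extensional_def gth_def)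
  next
    fix \<nu> assume "\<nu> < n"
    then show "kur_omega n q \<nu> = 1 / real n * (\<Sum>\<mu><n. kur_k n \<nu> * kur_k n \<mu> * sin (?th \<nu> - ?th \<mu>))"
      unfolding eq_term[OF n0] C S using qd
      by (simp add: kur_omega_def gth_sin algebra_simps)
  next
    show "(\<Sum>\<mu><n. complex_of_real (kur_k n \<mu>) * exp (\<i> * complex_of_real (?th \<mu>))) \<in> \<real>"
      unfolding complex_is_Real_iff re_sum S by simp
  next
    show "0 \<le> Re (\<Sum>\<mu><n. complex_of_real (kur_k n \<mu>) * exp (\<i> * complex_of_real (?th \<mu>)))"
      unfolding re_sum C using ca dpos by simp
  qed
qed


lemma E_gth:
  assumes ev: "even n" and n2: "n \<ge> 2" and q: "q > 0"
    and th: "\<theta> \<in> equilibria n (kur_omega n q) (kur_k n)"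
  shows "\<exists>P a. P \<subseteq> {..<n} \<and> n < 2 * card P \<and> 0 < a \<and> a < pi/2 \<and>
           sin (2*a) * (2 * real (card P) - real n) = 2 * q \<and> \<theta> = gth n P a"
proof -
  define C where "C = (\<Sum>\<mu><n. cos (\<theta> \<mu>))"
  define S where "S = (\<Sum>\<mu><n. sin (\<theta> \<mu>))"
  have n0: "n > 0" using n2 by simp
  have thPi: "\<theta> \<in> {0..<n} \<rightarrow>\<^sub>E {-pi<..pi}"
   and eqs: "\<And>\<nu>. \<nu> < n \<Longrightarrow> kur_omega n q \<nu> = real n * (sin (\<theta> \<nu>) * C - cos (\<theta> \<nu>) * S)"
   and im: "real n * S = 0" and re: "0 \<le> real n * C"
    using th unfolding equilibria_def eq_term[OF n0] complex_is_Real_iff re_sum C_def S_def by auto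
  have S0: "S = 0" using im n0 by simp
  have eqs': "\<And>\<nu>. \<nu> < n \<Longrightarrow> (if \<nu> < n div 2 then q else - q) = sin (\<theta> \<nu>) * C"
  proof -
    fix \<nu> assume "\<nu> < n"
    from eqs[OF this] have "real n * (if \<nu> < n div 2 then q else - q) = real n * (sin (\<theta> \<nu>) * C)"
      by (cases "\<nu> < n div 2") (simp_all add: kur_omega_def S0)
    then show "(if \<nu> < n div 2 then q else - q) = sin (\<theta> \<nu>) * C"
      using n0 by (simp only: mult_cancel_left) simp
  qed
  have h0: "0 < n div 2" using n2 by simp
  then have q0: "q = sin (\<theta> 0) * C" using eqs'[of 0] n0 by simp
  have Cge: "C \<ge> 0" using re n0 by (simp add: zero_le_mult_iff)
  have Cpos: "C > 0" using q0 q Cge by (cases "C = 0") auto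
  define s where "s = q / C"
  have sin_th: "\<And>\<nu>. \<nu> < n \<Longrightarrow> sin (\<theta> \<nu>) = (if \<nu> < n div 2 then s else - s)"
  proof -
    fix \<nu> assume v: "\<nu> < n"
    have "C \<noteq> 0" using Cpos by simp
    then show "sin (\<theta> \<nu>) = (if \<nu> < n div 2 then s else - s)"
      using eqs'[OF v] unfolding s_def by (cases "\<nu> < n div 2") (simp_all add: field_simps)
  qed
  have s0: "s > 0" using q Cpos s_def by simp
  have s1: "s \<le> 1" using sin_th[OF n0] h0 sin_le_one[of "\<theta> 0"] by simp
  have s1': "s < 1"
  proof (rule ccontr)
    assume "\<not> s < 1"
    then have "s = 1" using s1 by simp
    have "\<And>\<nu>. \<nu> < n \<Longrightarrow> cos (\<theta> \<nu>) = 0"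
    proof -
      fix \<nu> assume "\<nu> < n"
      have "(sin (\<theta> \<nu>))^2 = 1" using sin_th[OF \<open>\<nu> < n\<close>] \<open>s = 1\<close> by simp
      then have "(cos (\<theta> \<nu>))^2 = 0" using sin_cos_squared_add[of "\<theta> \<nu>"] by simp
      then show "cos (\<theta> \<nu>) = 0" by simp
    qed
    then have "C = 0" unfolding C_def by simp
    then show False using Cpos by simp
  qed
  define a where "a = arcsin s"
  have a0: "0 < a" using arcsin_less_arcsin[of 0 s] s0 s1 unfolding a_def by simp
  have a1: "a < pi/2" using arcsin_less_arcsin[of s 1] s0 s1' unfolding a_def by simp
  have sa: "sin a = s" using s0 s1 unfolding a_def by simp
  have ca: "cos a > 0" using a0 a1 by (intro cos_gt_zero) auto
  define P where "P = {\<nu>. \<nu> < n \<and> cos (\<theta> \<nu>) > 0}"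
  have P: "P \<subseteq> {..<n}" unfolding P_def by auto
  have rng: "\<And>\<nu>. \<nu> < n \<Longrightarrow> -pi < \<theta> \<nu> \<and> \<theta> \<nu> \<le> pi" using thPi by (auto simp: PiE_iff)
  have thg: "\<theta> = gth n P a"
  proof
    fix \<nu>
    show "\<theta> \<nu> = gth n P a \<nu>"
    proof (cases "\<nu> < n")
      case False
      then show ?thesis using thPi by (auto simp: PiE_iff extensional_def gth_def)
    next
      case True
      note r = rng[OF True]
      show ?thesis
      proof (cases "\<nu> < n div 2")
        case lo: True
        have "sin (\<theta> \<nu>) = sin a" using sin_th[OF True] lo sa by simp
        from sin_pos_cases[OF conjunct1[OF r] conjunct2[OF r] a0 a1 this]
        show ?thesis
        proof
          assume e: "\<theta> \<nu> = a"
          then have "\<nu> \<in> P" using ca True unfolding P_def by simp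
          then show ?thesis using e True lo by (simp add: gth_def)
        next
          assume e: "\<theta> \<nu> = pi - a"
          then have "\<nu> \<notin> P" using ca True unfolding P_def by simp
          then show ?thesis using e True lo by (simp add: gth_def)
        qed
      next
        case hi: False
        have "sin (\<theta> \<nu>) = - sin a" using sin_th[OF True] hi sa by simp
        from sin_neg_cases[OF conjunct1[OF r] conjunct2[OF r] a0 a1 this]
        show ?thesis
        proof
          assume e: "\<theta> \<nu> = - a"
          then have "\<nu> \<in> P" using ca True unfolding P_def by simp
          then show ?thesis using e True hi by (simp add: gth_def)
        next
          assume e: "\<theta> \<nu> = -(pi - a)"
          then have "\<nu> \<notin> P" using ca True unfolding P_def by simp
          then show ?thesis using e True hi by (simp add: gth_def)
        qed
      qed
    qed
  qed
  have Cd: "C = cos a * (2 * real (card P) - real n)"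
  proof -
    have "C = (\<Sum>\<mu><n. if \<mu> \<in> P then cos a else - cos a)"
      unfolding C_def thg by (intro sum.cong) (auto simp: gth_cos)
    then show ?thesis using sum_pm[OF P] by simp
  qed
  have dpos: "2 * real (card P) - real n > 0" using Cd Cpos ca by (simp add: zero_less_mult_iff)
  then have "n < 2 * card P" by linarith
  moreover have "sin (2*a) * (2 * real (card P) - real n) = 2 * q"
  proof -
    have "sin (2*a) * (2 * real (card P) - real n) = 2 * s * C"
      unfolding sin_double sa Cd by (simp add: algebra_simps)
    also have "\<dots> = 2 * q" using Cpos unfolding s_def by simp
    finally show ?thesis .
  qed
  ultimately show ?thesis using P a0 a1 thg by blast
qed


lemma gth_inv:
  assumes n2: "n \<ge> 2" and P: "P \<subseteq> {..<n}" and a: "0 < a" "a < pi/2"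
  shows "({\<nu>. \<nu> < n \<and> cos (gth n P a \<nu>) > 0}, arcsin (sin (gth n P a 0))) = (P, a)"
proof -
  have ca: "cos a > 0" using a by (intro cos_gt_zero) auto
  have "{\<nu>. \<nu> < n \<and> cos (gth n P a \<nu>) > 0} = P"
    using P ca by (auto simp: gth_cos split: if_splits)
  moreover have "sin (gth n P a 0) = sin a" using n2 by (simp add: gth_sin)
  moreover have "arcsin (sin a) = a" using a pi_gt_zero by (intro arcsin_sin') linarith+
  ultimately show ?thesis by simp
qed

lemma A_sub:
  fixes q d :: real
  assumes d: "d > 0"
  shows "{a. 0 < a \<and> a < pi/2 \<and> sin (2*a) * d = 2 * q} \<subseteq> {arcsin (2*q/d) / 2, pi/2 - arcsin (2*q/d) / 2}"
proof
  fix a assume "a \<in> {a. 0 < a \<and> a < pi/2 \<and> sin (2*a) * d = 2 * q}"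
  then have a: "0 < 2*a" "2*a < pi" and e: "sin (2*a) = 2*q/d" using d by (auto simp: field_simps)
  from sin2_cases[OF a e] show "a \<in> {arcsin (2*q/d) / 2, pi/2 - arcsin (2*q/d) / 2}" by auto
qed

lemma A_eq:
  fixes q d :: real
  assumes d: "d \<ge> 2" and q: "0 < q" "q < 1"
  shows "card {a. 0 < a \<and> a < pi/2 \<and> sin (2*a) * d = 2 * q} = 2"
proof -
  define b where "b = 2*q/d"
  have b0: "0 < b" using d q unfolding b_def by simp
  have b1: "b < 1"
  proof -
    have "2*q < d" using d q by linarith
    then show ?thesis using d unfolding b_def by simp
  qed
  define t where "t = arcsin b"
  have t0: "0 < t" using arcsin_less_arcsin[of 0 b] b0 b1 unfolding t_def by simp
  have t1: "t < pi/2" using arcsin_less_arcsin[of b 1] b0 b1 unfolding t_def by simp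
  have st: "sin t = b" using b0 b1 unfolding t_def by simp
  have bd: "b * d = 2 * q" using d unfolding b_def by simp
  have "{a. 0 < a \<and> a < pi/2 \<and> sin (2*a) * d = 2 * q} = {t/2, pi/2 - t/2}"
  proof
    show "{a. 0 < a \<and> a < pi/2 \<and> sin (2*a) * d = 2 * q} \<subseteq> {t/2, pi/2 - t/2}"
      using A_sub[of d q] d unfolding t_def b_def by simp
  next
    have e1: "sin (2 * (t/2)) = b" using st by simp
    have "2 * (pi/2 - t/2) = pi - t" by (simp add: algebra_simps)
    then have e2: "sin (2 * (pi/2 - t/2)) = b" using st by simp
    show "{t/2, pi/2 - t/2} \<subseteq> {a. 0 < a \<and> a < pi/2 \<and> sin (2*a) * d = 2 * q}"
      using t0 t1 e1 e2 bd by auto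
  qed
  moreover have "t/2 \<noteq> pi/2 - t/2" using t1 by simp
  ultimately show ?thesis by simp
qed

lemma card_Ps:
  assumes ev: "even n"
  shows "2 * card {P. P \<subseteq> {..<n} \<and> n < 2 * card P} + (n choose (n div 2)) = 2 ^ n"
proof -
  define U where "U = {P. P \<subseteq> {..<n} \<and> n < 2 * card P}"
  define L where "L = {P. P \<subseteq> {..<n} \<and> 2 * card P < n}"
  define M where "M = {P. P \<subseteq> {..<n} \<and> card P = n div 2}"
  have fin: "finite U" "finite L" "finite M" unfolding U_def L_def M_def
    by (auto intro: finite_subset[of _ "Pow {..<n}"])
  have "Pow {..<n} = U \<union> L \<union> M" unfolding U_def L_def M_def using ev by auto
  moreover have "U \<inter> L = {}" "(U \<union> L) \<inter> M = {}" unfolding U_def L_def M_def using ev by auto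
  ultimately have "card (Pow {..<n}) = card U + card L + card M"
    using fin by (simp add: card_Un_disjoint)
  moreover have "card (Pow {..<n}) = 2 ^ n" by (simp add: card_Pow)
  moreover have "card M = n choose (n div 2)" unfolding M_def using n_subsets[of "{..<n}" "n div 2"] by simp
  moreover have "card L = card U"
  proof -
    have "bij_betw (\<lambda>P. {..<n} - P) U L"
    proof (rule bij_betw_byWitness[where f' = "\<lambda>P. {..<n} - P"])
      show "\<forall>a\<in>U. {..<n} - ({..<n} - a) = a" unfolding U_def by auto
      show "\<forall>a\<in>L. {..<n} - ({..<n} - a) = a" unfolding L_def by auto
      show "(\<lambda>P. {..<n} - P) ` U \<subseteq> L"
      proof
        fix X assume "X \<in> (\<lambda>P. {..<n} - P) ` U"
        then obtain P where P: "P \<subseteq> {..<n}" "n < 2 * card P" and X: "X = {..<n} - P" unfolding U_def by auto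
        have "card X = n - card P" using P X by (simp add: card_Diff_subset finite_subset)
        moreover have "card P \<le> n" using P card_mono[of "{..<n}" P] by simp
        ultimately show "X \<in> L" using P X unfolding L_def by auto
      qed
      show "(\<lambda>P. {..<n} - P) ` L \<subseteq> U"
      proof
        fix X assume "X \<in> (\<lambda>P. {..<n} - P) ` L"
        then obtain P where P: "P \<subseteq> {..<n}" "2 * card P < n" and X: "X = {..<n} - P" unfolding L_def by auto
        have "card X = n - card P" using P X by (simp add: card_Diff_subset finite_subset)
        then show "X \<in> U" using P X unfolding U_def by auto
      qed
    qed
    then show ?thesis by (simp add: bij_betw_same_card)
  qed
  ultimately show ?thesis unfolding U_def by simp
qed


lemma main_q:
  assumes ev: "even n" and n2: "n \<ge> 2" and q: "q > 0"
  shows "finite (equilibria n (kur_omega n q) (kur_k n)) \<and>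
         card (equilibria n (kur_omega n q) (kur_k n)) \<le> 2 ^ n - (n choose (n div 2)) \<and>
         (q < 1 \<longrightarrow> card (equilibria n (kur_omega n q) (kur_k n)) = 2 ^ n - (n choose (n div 2)))"
proof -
  define E where "E = equilibria n (kur_omega n q) (kur_k n)"
  define Ps where "Ps = {P. P \<subseteq> {..<n} \<and> n < 2 * card P}"
  define A where "A = (\<lambda>P::nat set. {a. 0 < a \<and> a < pi/2 \<and> sin (2*a) * (2 * real (card P) - real n) = 2 * q})"
  define T where "T = Sigma Ps A"
  define F where "F = (\<lambda>(P, a). gth n P a)"
  have ET: "E = F ` T"
  proof
    show "E \<subseteq> F ` T"
    proof
      fix \<theta> assume "\<theta> \<in> E"
      from E_gth[OF ev n2 q this[unfolded E_def]] obtain P a where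
        "P \<subseteq> {..<n}" "n < 2 * card P" "0 < a" "a < pi/2"
        "sin (2*a) * (2 * real (card P) - real n) = 2 * q" "\<theta> = gth n P a" by blast
      then show "\<theta> \<in> F ` T" unfolding T_def Ps_def A_def F_def by force
    qed
  next
    show "F ` T \<subseteq> E"
      unfolding T_def Ps_def A_def F_def E_def using gth_in_E[OF ev n2 q] by auto
  qed
  have dpos: "\<And>P. P \<in> Ps \<Longrightarrow> 2 * real (card P) - real n > 0" unfolding Ps_def by auto
  have finPs: "finite Ps" unfolding Ps_def by (auto intro: finite_subset[of _ "Pow {..<n}"])
  have Asub: "\<And>P. P \<in> Ps \<Longrightarrow> A P \<subseteq> {arcsin (2*q/(2 * real (card P) - real n)) / 2, pi/2 - arcsin (2*q/(2 * real (card P) - real n)) / 2}"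
    unfolding A_def using A_sub dpos by blast
  have finA: "\<And>P. P \<in> Ps \<Longrightarrow> finite (A P)" using Asub by (meson finite.emptyI finite_insert finite_subset)
  have cardA: "\<And>P. P \<in> Ps \<Longrightarrow> card (A P) \<le> 2"
  proof -
    fix P assume P: "P \<in> Ps"
    have "card (A P) \<le> card {arcsin (2*q/(2 * real (card P) - real n)) / 2, pi/2 - arcsin (2*q/(2 * real (card P) - real n)) / 2}"
      by (rule card_mono[OF _ Asub[OF P]]) simp
    also have "\<dots> \<le> 2" by (simp add: card_insert_if)
    finally show "card (A P) \<le> 2" .
  qed
  have finT: "finite T" unfolding T_def using finPs finA by auto
  have cT: "card T = (\<Sum>P\<in>Ps. card (A P))" unfolding T_def using finPs finA by simp
  have cPs: "2 * card Ps = 2 ^ n - (n choose (n div 2))" using card_Ps[OF ev] unfolding Ps_def by simp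
  have "card T \<le> (\<Sum>P\<in>Ps. 2)" unfolding cT by (rule sum_mono) (rule cardA)
  then have cTle: "card T \<le> 2 ^ n - (n choose (n div 2))" using cPs by simp
  have "card E \<le> card T" unfolding ET by (rule card_image_le[OF finT])
  moreover have "finite E" unfolding ET using finT by simp
  moreover have "q < 1 \<longrightarrow> card E = 2 ^ n - (n choose (n div 2))"
  proof
    assume q1: "q < 1"
    have "inj_on F T"
    proof (rule inj_on_inverseI[where g = "\<lambda>\<theta>. ({\<nu>. \<nu> < n \<and> cos (\<theta> \<nu>) > 0}, arcsin (sin (\<theta> 0)))"])
      fix x assume "x \<in> T"
      then obtain P a where x: "x = (P, a)" "P \<subseteq> {..<n}" "0 < a" "a < pi/2"
        unfolding T_def Ps_def A_def by auto
      show "({\<nu>. \<nu> < n \<and> cos (F x \<nu>) > 0}, arcsin (sin (F x 0))) = x"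
        using gth_inv[OF n2 x(2-4)] x(1) unfolding F_def by simp
    qed
    then have "card E = card T" unfolding ET by (rule card_image)
    also have "card T = (\<Sum>P\<in>Ps. 2)" unfolding cT
    proof (rule sum.cong[OF refl])
      fix P assume P: "P \<in> Ps"
      have "2 * card P \<ge> n + 2" using P ev unfolding Ps_def by (auto elim!: evenE)
      then have "2 * real (card P) - real n \<ge> 2" by linarith
      from A_eq[OF this q q1] show "card (A P) = 2" unfolding A_def .
    qed
    finally show "card E = 2 ^ n - (n choose (n div 2))" using cPs by simp
  qed
  ultimately show ?thesis using cTle unfolding E_def by simp
qed

theorem corollary2:
  fixes n :: nat
  assumes "even n" and "n \<ge> 2"
  shows "(\<forall>q::real. q > 0 \<longrightarrow>
            finite (equilibria n (kur_omega n q) (kur_k n)) \<and>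
            card (equilibria n (kur_omega n q) (kur_k n)) \<le> 2 ^ n - (n choose (n div 2))) \<and>
         (\<forall>q::real. 0 < q \<and> q < 1 \<longrightarrow>
            finite (equilibria n (kur_omega n q) (kur_k n)) \<and>
            card (equilibria n (kur_omega n q) (kur_k n)) = 2 ^ n - (n choose (n div 2)))"
  using main_q[OF assms] by blast

end
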